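(* Let $f=\frac1n\sum_{i=1}^n f_i$ with each $f_i:\mathbb{R}^d\to\mathbb{R}$ twice continuously differentiable, and suppose there are constants $0<\mu<L$ such that for all $i$ and all $x,\hat x\in\mathbb{R}^d$, $$\mu\|x-\hat x\|^2\le (\nabla f_i(x)-\nabla f_i(\hat x))^\top(x-\hat x)\le L\|x-\hat x\|^2 .$$ Let $x^*$ be the minimizer of $f$ and $\kappa=L/\mu$. Consider the asynchronous L-DQN iteration described in the context, with a constant stepsize $\eta_t=\eta$, and suppose there are constants $0<\epsilon_d<\epsilon_u$ such that for all $i=1,\dots,n$, all $t>0$ and all $x\in\mathbb{R}^d$, $$\epsilon_d I_d\preceq (\tilde B_i^t)^{-1/2}\nabla^2 f_i(x)(\tilde B_i^t)^{-1/2}\preceq \epsilon_u I_d .$$ Suppose the ratio $\epsilon:=\epsilon_u/\epsilon_d$ satisfies $$\epsilon<\frac12\left[1+\frac1\kappa+\sqrt{\Big(1+\frac1\kappa\Big)^2+\frac4\kappa}\right],$$ and that the stepsize satisfies $\eta\in\Big(\frac{1}{\epsilon_d}\big[1-\frac{1}{\epsilon\kappa}\big],\ \frac{2}{\epsilon_d+\epsilon_u}\Big)$. Then the iterates converge linearly over epochs: there exists $\rho<1$ such that for every $m\in\mathbb{N}^+$ and every $t\in[E_m,E_{m+1})$, $$\|x^{t+1}-x^*\|\le \rho^{m}\|x^0-x^*\|.$$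
   Context: Setting (master/worker, asynchronous): a master holds the iterate $x^t\in\mathbb{R}^d$ at time $t=0,1,2,\dots$; at each time $t$ one worker $i_t\in\{1,\dots,n\}$ communicates with the master. For worker $i$ and time $t$, $d_i^t\ge 0$ denotes the delay, i.e. the last exchange between the master and worker $i$ took place at time $t-d_i^t$, and $D_i^t:=d_i^t+d_i^{t-d_i^t-1}+1$ denotes the double delay, i.e. the exchange before that took place at time $t-D_i^t$. Each worker $i$ holds a local copy $z_i^t$ of the iterate it last received from the master (so $z_i^t=z_i^{t-d_i^t}$ is an earlier master iterate) and a symmetric positive definite matrix $\tilde B_i^t=\tilde B_i^{t-d_i^t}$ (its Hessian approximation of $f_i$, which in L-DQN is produced by limited-memory BFGS updates with memory $m$ and scaling $\gamma_i=\|y_i\|^2/(y_i^\top s_i)$, $s_i=x-z_i$, $y_i=\nabla f_i(x)-\nabla f_i(z_i)$; only the spectral hypothesis in the claim is used about these matrices). Initially $z_i^0=x^0$. The master update is $$x^{t+1}=\big(\tilde B^t\big)^{-1}\Big[\sum_{i=1}^n \tilde B_i^t z_i^t-\eta_t\sum_{i=1}^n\nabla f_i(z_i^t)\Big],\qquad \tilde B^t:=\sum_{i=1}^n\tilde B_i^t .$$ Epochs: $E_1=0$ and $E_{m+1}=\min\{t:\ t-D_i^t\ge E_m \text{ for all } i=1,\dots,n\}$, i.e. $E_{m+1}$ is the first time $t$ such that every worker has made at least two updates in $[E_m,t]$. $I_d$ is the $d\times d$ identity, $\preceq$ the Loewner order, $\|\cdot\|$ the Euclidean norm. *)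

theory Defs
  imports "HOL-Analysis.Analysis"
begin

definition sym_mat :: "real^'n^'n \<Rightarrow> bool" where
  "sym_mat A \<longleftrightarrow> transpose A = A"

definition pos_def_mat :: "real^'n^'n \<Rightarrow> bool" where
  "pos_def_mat A \<longleftrightarrow> sym_mat A \<and> (\<forall>v. v \<noteq> 0 \<longrightarrow> 0 < v \<bullet> (A *v v))"

definition loewner_le :: "real^'n^'n \<Rightarrow> real^'n^'n \<Rightarrow> bool" where
  "loewner_le A B \<longleftrightarrow> (\<forall>v. v \<bullet> (A *v v) \<le> v \<bullet> (B *v v))"

definition psd_sqrt :: "real^'n^'n \<Rightarrow> real^'n^'n" where
  "psd_sqrt A = (THE S. sym_mat S \<and> (\<forall>v. 0 \<le> v \<bullet> (S *v v)) \<and> S ** S = A)"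

definition inv_sqrt :: "real^'n^'n \<Rightarrow> real^'n^'n" where
  "inv_sqrt B = psd_sqrt (matrix_inv B)"

text \<open>sched t is the worker i_t communicating with the master at time t.\<close>

definition delay :: "(nat \<Rightarrow> nat) \<Rightarrow> nat \<Rightarrow> nat \<Rightarrow> nat" where
  "delay sched i t = t - Max {s. s \<le> t \<and> sched s = i}"

definition double_delay :: "(nat \<Rightarrow> nat) \<Rightarrow> nat \<Rightarrow> nat \<Rightarrow> nat" where
  "double_delay sched i t =
     delay sched i t + delay sched i (t - delay sched i t - 1) + 1"

text \<open>Local copy z_i^t held (at the master) for worker i: the master iterate the worker
  received at its exchange before the last one (at time t - D_i^t, receiving x^(t - D_i^t + 1));
  initially x^0.\<close>
definition local_copy :: "(nat \<Rightarrow> real^'d) \<Rightarrow> (nat \<Rightarrow> nat) \<Rightarrow> nat \<Rightarrow> nat \<Rightarrow> real^'d" where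
  "local_copy x sched i t =
     (if 2 \<le> card {s. s \<le> t \<and> sched s = i}
      then x (t - double_delay sched i t + 1) else x 0)"

text \<open>Epochs: epoch 1 = E_1 = 0, epoch (m+1) = E_(m+1) = first t such that every worker
  made at least two updates in [E_m, t]. (epoch 0 is a dummy value.)\<close>
fun epoch :: "(nat \<Rightarrow> nat) \<Rightarrow> nat \<Rightarrow> nat \<Rightarrow> nat" where
  "epoch sched n 0 = 0"
| "epoch sched n (Suc 0) = 0"
| "epoch sched n (Suc (Suc m)) =
     (LEAST t. \<forall>i\<in>{1..n}. 2 \<le> card {s. epoch sched n (Suc m) \<le> s \<and> s \<le> t \<and> sched s = i})"

end

theory Submission
  imports Defs
begin


definition psd :: "real^'n^'n \<Rightarrow> bool" where
  "psd M \<longleftrightarrow> (\<forall>v. 0 \<le> v \<bullet> (M *v v))"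

lemma sym_inner: "sym_mat A \<Longrightarrow> x \<bullet> (A *v y) = (A *v x) \<bullet> y"
proof -
  assume "sym_mat A"
  hence tA: "transpose A = A" by (simp add: sym_mat_def)
  have "x \<bullet> (A *v y) = (x v* A) \<bullet> y" by (simp add: dot_lmul_matrix)
  also have "x v* A = A *v x" using vector_transpose_matrix[of x A] tA by simp
  finally show ?thesis .
qed

lemma mat_eqI: "(\<And>v. A *v v = B *v v) \<Longrightarrow> (A::real^'n^'m) = B"
  by (simp add: matrix_eq)

lemma transpose_add: "transpose (A + B) = transpose A + transpose (B::real^'n^'m)"
  by (simp add: transpose_def vec_eq_iff)
lemma transpose_diff: "transpose (A - B) = transpose A - transpose (B::real^'n^'m)"
  by (simp add: transpose_def vec_eq_iff)
lemma transpose_scaleR: "transpose (c *\<^sub>R A) = c *\<^sub>R transpose (A::real^'n^'m)"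
  by (simp add: transpose_def vec_eq_iff)

lemma mat_scaleR_mult: "(c *\<^sub>R A) *v v = c *\<^sub>R (A *v v)" for A :: "real^'n^'m"
  by (simp add: vec_eq_iff matrix_vector_mult_def sum_distrib_left mult.assoc)

lemma mat_add_mult: "(A + B) *v v = A *v v + B *v v" for A :: "real^'n^'m"
  by (simp add: matrix_vector_mult_add_rdistrib)
lemma mat_diff_mult: "(A - B) *v v = A *v v - B *v v" for A :: "real^'n^'m"
  by (simp add: matrix_vector_mult_diff_rdistrib)

lemma sym_bound:
  fixes A :: "real^'n^'n"
  assumes S: "sym_mat A" and b: "\<And>v. \<bar>v \<bullet> (A *v v)\<bar> \<le> M * (norm v)\<^sup>2"
  shows "norm (A *v v) \<le> M * norm v"
proof (cases "A *v v = 0")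
  case True
  have "0 \<le> M * (norm v)^2" using b[of v] by linarith
  have "0 \<le> M * norm v"
  proof (cases "v = 0")
    case False
    hence "norm v > 0" by simp
    have "M * norm v = (M * (norm v)^2) / norm v" using \<open>norm v > 0\<close> by (simp add: power2_eq_square)
    also have "\<dots> \<ge> 0" using \<open>norm v > 0\<close> \<open>0 \<le> M * (norm v)^2\<close> by simp
    finally show ?thesis .
  qed simp
  then show ?thesis using True by simp
next
  case False
  define w where "w = A *v v"
  have wn: "norm w > 0" using False w_def by simp
  have vnz: "v \<noteq> 0" using False by auto
  define u where "u = (norm v / norm w) *\<^sub>R w"
  have nu: "norm u = norm v" using wn by (simp add: u_def)
  have uAv: "u \<bullet> (A *v v) = norm v * norm w"
    using wn by (simp add: u_def w_def inner_scaleR_left power2_norm_eq_inner[symmetric] power2_eq_square)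
  have symm: "v \<bullet> (A *v u) = u \<bullet> (A *v v)"
    using sym_inner[OF S, of v u] by (simp add: inner_commute)
  have p1: "(u + v) \<bullet> (A *v (u + v)) = u \<bullet> (A *v u) + 2 * (u \<bullet> (A *v v)) + v \<bullet> (A *v v)"
    using symm by (simp add: matrix_vector_right_distrib inner_add_left inner_add_right)
  have p2: "(u - v) \<bullet> (A *v (u - v)) = u \<bullet> (A *v u) - 2 * (u \<bullet> (A *v v)) + v \<bullet> (A *v v)"
    using symm by (simp add: matrix_vector_mult_diff_distrib inner_diff_left inner_diff_right)
  have "4 * (u \<bullet> (A *v v)) = (u + v) \<bullet> (A *v (u + v)) - (u - v) \<bullet> (A *v (u - v))"
    using p1 p2 by simp
  also have "\<dots> \<le> M * (norm (u+v))\<^sup>2 + M * (norm (u - v))\<^sup>2"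
    using b[of "u+v"] b[of "u-v"] by linarith
  also have "\<dots> = M * (2 * (norm u)\<^sup>2 + 2 * (norm v)\<^sup>2)"
    by (simp add: power2_norm_eq_inner inner_add_left inner_add_right inner_diff_left
        inner_diff_right inner_commute algebra_simps)
  finally have "norm v * norm w \<le> M * (norm v)\<^sup>2" using nu uAv by simp
  hence "norm v * norm w \<le> norm v * (M * norm v)" by (simp add: power2_eq_square algebra_simps)
  hence "norm w \<le> M * norm v" using vnz by simp
  then show ?thesis by (simp add: w_def)
qed

lemma psd_zero:
  fixes M :: "real^'n^'n"
  assumes S: "sym_mat M" and P: "psd M" and z: "v \<bullet> (M *v v) = 0"
  shows "M *v v = 0"
proof (rule ccontr)
  assume nz: "M *v v \<noteq> 0"
  define w where "w = M *v v"
  define c where "c = w \<bullet> (M *v w) + 1"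
  have c0: "c > 0" using P by (simp add: psd_def c_def add_nonneg_pos)
  have wp: "w \<bullet> w > 0" using nz w_def by simp
  define t where "t = - (w \<bullet> w) / c"
  have symm: "v \<bullet> (M *v w) = w \<bullet> w"
    using sym_inner[OF S, of v w] by (simp add: w_def)
  have "0 \<le> (v + t *\<^sub>R w) \<bullet> (M *v (v + t *\<^sub>R w))" using P by (simp add: psd_def)
  also have "\<dots> = 2 * t * (w \<bullet> w) + t^2 * (w \<bullet> (M *v w))"
    using symm z by (simp add: matrix_vector_right_distrib matrix_vector_mult_scaleR inner_add_left
        inner_add_right w_def algebra_simps power2_eq_square)
  also have "\<dots> \<le> 2 * t * (w \<bullet> w) + t^2 * c"
    by (simp add: c_def mult_left_mono)
  also have "\<dots> = - ((w \<bullet> w) * (w \<bullet> w)) / c"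
    using c0 by (simp add: t_def field_simps power2_eq_square)
  also have "\<dots> < 0" using wp c0 by simp
  finally show False by simp
qed

primrec mpow :: "real^'n^'n \<Rightarrow> nat \<Rightarrow> real^'n^'n" where
  "mpow A 0 = mat 1"
| "mpow A (Suc k) = A ** mpow A k"

lemma mpow_add: "mpow A (j + k) = mpow A j ** mpow A k"
  by (induction j) (simp_all add: matrix_mul_assoc)

lemma mpow_one: "mpow A (Suc 0) = A" by simp

lemma mpow_comm: "mpow A j ** mpow A k = mpow A k ** mpow A j"
  by (metis mpow_add add.commute)

inductive_set cone :: "real^'n^'n \<Rightarrow> (real^'n^'n) set" for A where
  cpow: "mpow A k \<in> cone A"
| cadd: "X \<in> cone A \<Longrightarrow> Y \<in> cone A \<Longrightarrow> X + Y \<in> cone A"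
| cscale: "X \<in> cone A \<Longrightarrow> 0 \<le> a \<Longrightarrow> a *\<^sub>R X \<in> cone A"

lemma matrix_add_rdistrib': "(A + B) ** C = A ** C + B ** (C::real^'n^'n)"
  by (rule mat_eqI) (simp add: matrix_vector_mul_assoc[symmetric] mat_add_mult)

lemma scale_mult_l: "(a *\<^sub>R A) ** C = a *\<^sub>R (A ** (C::real^'n^'n))"
  by (simp add: scalar_matrix_assoc)
lemma scale_mult_r: "A ** (a *\<^sub>R C) = a *\<^sub>R (A ** (C::real^'n^'n))"
  by (rule mat_eqI) (simp add: matrix_vector_mul_assoc[symmetric] mat_scaleR_mult matrix_vector_mult_scaleR)

lemma cone_mult_pow: "Y \<in> cone A \<Longrightarrow> mpow A j ** Y \<in> cone A \<and> Y ** mpow A j = mpow A j ** Y"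
proof (induction rule: cone.induct)
  case (cpow k)
  then show ?case by (metis cone.cpow mpow_add mpow_comm)
next
  case (cadd X Y)
  then show ?case by (simp add: matrix_add_ldistrib matrix_add_rdistrib' cone.cadd)
next
  case (cscale X a)
  then show ?case by (simp add: scale_mult_l scale_mult_r cone.cscale)
qed

lemma cone_mult: "X \<in> cone A \<Longrightarrow> Y \<in> cone A \<Longrightarrow> X ** Y \<in> cone A \<and> X ** Y = Y ** X"
proof (induction X rule: cone.induct)
  case (cpow k)
  then show ?case using cone_mult_pow by metis
next
  case (cadd X Z)
  have e1: "(X + Z) ** Y = X ** Y + Z ** Y" by (rule matrix_add_rdistrib')
  have e2: "Y ** (X + Z) = Y ** X + Y ** Z" by (rule matrix_add_ldistrib)
  show ?case unfolding e1 e2 using cadd by (auto intro: cone.cadd)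
next
  case (cscale X a)
  have "a *\<^sub>R (X ** Y) \<in> cone A" using cscale by (auto intro: cone.cscale)
  then show ?case using cscale by (simp add: scale_mult_l scale_mult_r)
qed

lemma sym_mpow: "sym_mat A \<Longrightarrow> sym_mat (mpow A k)"
proof (induction k)
  case 0 then show ?case by (simp add: sym_mat_def)
next
  case (Suc k)
  have "transpose (A ** mpow A k) = mpow A k ** A"
    using Suc by (simp add: matrix_transpose_mul sym_mat_def)
  also have "\<dots> = A ** mpow A k" using mpow_comm[of A k "Suc 0"] by simp
  finally show ?case by (simp add: sym_mat_def)
qed

lemma psd_mpow: assumes S: "sym_mat A" and P: "psd A" shows "psd (mpow A k)"
proof -
  have ev: "mpow A (j + j) = mpow A j ** mpow A j" for j by (rule mpow_add)
  have od: "mpow A (j + Suc j) = mpow A j ** (A ** mpow A j)" for j using mpow_add[of A j "Suc j"] by simp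
  show ?thesis unfolding psd_def
  proof
    fix v
    have "\<exists>j. k = j + j \<or> k = j + Suc j" by presburger
    then obtain j where "k = j + j \<or> k = j + Suc j" by blast
    then show "0 \<le> v \<bullet> (mpow A k *v v)"
    proof
      assume "k = j + j"
      hence "v \<bullet> (mpow A k *v v) = (mpow A j *v v) \<bullet> (mpow A j *v v)"
        using ev sym_inner[OF sym_mpow[OF S], of v j "mpow A j *v v"]
        by (simp add: matrix_vector_mul_assoc[symmetric])
      then show ?thesis by simp
    next
      assume "k = j + Suc j"
      hence "v \<bullet> (mpow A k *v v) = (mpow A j *v v) \<bullet> (A *v (mpow A j *v v))"
        using od sym_inner[OF sym_mpow[OF S], of v j "A *v (mpow A j *v v)"]
        by (simp add: matrix_vector_mul_assoc[symmetric])
      then show ?thesis using P by (simp add: psd_def)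
    qed
  qed
qed

lemma cone_sym_psd: assumes S: "sym_mat A" and P: "psd A"
  shows "X \<in> cone A \<Longrightarrow> sym_mat X \<and> psd X"
proof (induction rule: cone.induct)
  case (cpow k)
  then show ?case using sym_mpow[OF S] psd_mpow[OF S P] by blast
next
  case (cadd X Y)
  then show ?case by (simp add: sym_mat_def psd_def transpose_add mat_add_mult inner_add_right add_nonneg_nonneg)
next
  case (cscale X a)
  then show ?case by (simp add: sym_mat_def psd_def transpose_scaleR mat_scaleR_mult)
qed

lemma matrix_diff_rdistrib': "(A - B) ** C = A ** C - B ** (C::real^'n^'n)"
  by (rule mat_eqI) (simp add: matrix_vector_mul_assoc[symmetric] mat_diff_mult)

primrec Yit :: "real^'n^'n \<Rightarrow> nat \<Rightarrow> real^'n^'n" where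
  "Yit B 0 = 0"
| "Yit B (Suc k) = (1/2) *\<^sub>R (B + Yit B k ** Yit B k)"

lemma B_cone: "B \<in> cone B" using cone.cpow[of B "Suc 0"] by simp

lemma Yit_cone: "Yit B k \<in> cone B"
proof (induction k)
  case 0
  have "(0::real) *\<^sub>R mpow B 0 \<in> cone B" by (intro cone.cscale cone.cpow) simp
  then show ?case by simp
next
  case (Suc k)
  have "Yit B k ** Yit B k \<in> cone B" using cone_mult[OF Suc Suc] by blast
  then show ?case by (simp add: B_cone cone.cadd cone.cscale)
qed

lemma Yit_diff_cone: "Yit B (Suc k) - Yit B k \<in> cone B"
proof (induction k)
  case 0
  show ?case using cone.cscale[OF B_cone, of "1/2"] by simp
next
  case (Suc k)
  define P where "P = Yit B (Suc k)"
  define Q where "Q = Yit B k"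
  have PQ: "P ** Q = Q ** P" using cone_mult[OF Yit_cone Yit_cone] P_def Q_def by blast
  have "(P - Q) ** (P + Q) = P ** P - Q ** Q"
    by (simp add: matrix_add_ldistrib matrix_diff_rdistrib' PQ)
  moreover have "(P - Q) ** (P + Q) \<in> cone B"
    using cone_mult[OF Suc[folded P_def Q_def] cone.cadd[OF Yit_cone Yit_cone]] P_def Q_def by blast
  ultimately have "P ** P - Q ** Q \<in> cone B" by simp
  hence "(1/2) *\<^sub>R (P ** P - Q ** Q) \<in> cone B" by (rule cone.cscale) simp
  moreover have "Yit B (Suc (Suc k)) - Yit B (Suc k) = (1/2) *\<^sub>R (P ** P - Q ** Q)"
    by (simp add: P_def Q_def algebra_simps)
  ultimately show ?case by simp
qed

lemma quad_le_norm: "v \<bullet> (A *v v) \<le> norm v * norm (A *v v)"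
  by (rule norm_cauchy_schwarz)

lemma polar: assumes "sym_mat A"
  shows "u \<bullet> (A *v w) = ((u + w) \<bullet> (A *v (u + w)) - (u - w) \<bullet> (A *v (u - w))) / 4"
proof -
  have symm: "w \<bullet> (A *v u) = u \<bullet> (A *v w)"
    using sym_inner[OF assms, of w u] by (simp add: inner_commute)
  show ?thesis using symm
    by (simp add: matrix_vector_right_distrib matrix_vector_mult_diff_distrib
        inner_add_left inner_add_right inner_diff_left inner_diff_right)
qed


lemma entry_inner: "(A :: real^'n^'n) $ i $ j = axis i 1 \<bullet> (A *v axis j 1)"
  by (simp add: inner_vec_def matrix_vector_mult_def axis_def if_distrib if_distribR sum.delta cong del: if_weak_cong)


lemma quad_expand: "v \<bullet> (A *v v) = (\<Sum>i\<in>UNIV. v $ i * (\<Sum>j\<in>UNIV. A $ i $ j * v $ j))"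
  by (simp add: inner_vec_def matrix_vector_mult_def)


context
  fixes B :: "real^'n^'n"
  assumes S: "sym_mat B" and P: "psd B" and U: "\<And>v. v \<bullet> (B *v v) \<le> (norm v)\<^sup>2"
begin

lemma B_norm: "norm (B *v w) \<le> norm w"
proof -
  have "\<bar>v \<bullet> (B *v v)\<bar> \<le> 1 * (norm v)\<^sup>2" for v using U[of v] P by (simp add: psd_def)
  from sym_bound[OF S this] show ?thesis by simp
qed

lemma Yit_norm: "norm (Yit B k *v w) \<le> norm w"
proof (induction k arbitrary: w)
  case 0 then show ?case by simp
next
  case (Suc k)
  have "norm (Yit B (Suc k) *v w) = (1/2) * norm (B *v w + Yit B k *v (Yit B k *v w))"
    by (simp add: mat_scaleR_mult mat_add_mult matrix_vector_mul_assoc)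
  also have "\<dots> \<le> (1/2) * (norm (B *v w) + norm (Yit B k *v (Yit B k *v w)))"
    by (simp add: norm_triangle_ineq)
  also have "\<dots> \<le> (1/2) * (norm w + norm w)"
    using B_norm[of w] Suc[of "Yit B k *v w"] Suc[of w] by simp
  finally show ?case by simp
qed

lemma Yit_sym_psd: "sym_mat (Yit B k) \<and> psd (Yit B k)"
  using cone_sym_psd[OF S P Yit_cone] .

lemma Yit_quad_le: "v \<bullet> (Yit B k *v v) \<le> (norm v)\<^sup>2"
proof -
  have "v \<bullet> (Yit B k *v v) \<le> norm v * norm (Yit B k *v v)" by (rule quad_le_norm)
  also have "\<dots> \<le> norm v * norm v" by (rule mult_left_mono[OF Yit_norm norm_ge_zero])
  finally show ?thesis by (simp add: power2_eq_square)
qed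

lemma Yit_quad_mono: "incseq (\<lambda>k. v \<bullet> (Yit B k *v v))"
proof (rule incseq_SucI)
  fix k
  have "psd (Yit B (Suc k) - Yit B k)" using cone_sym_psd[OF S P Yit_diff_cone] by blast
  hence "0 \<le> v \<bullet> ((Yit B (Suc k) - Yit B k) *v v)" by (simp add: psd_def)
  then show "v \<bullet> (Yit B k *v v) \<le> v \<bullet> (Yit B (Suc k) *v v)"
    by (simp add: mat_diff_mult inner_diff_right)
qed

lemma Yit_quad_conv: "convergent (\<lambda>k. v \<bullet> (Yit B k *v v))"
proof -
  have "\<forall>k. v \<bullet> (Yit B k *v v) \<le> (norm v)\<^sup>2" using Yit_quad_le by blast
  then obtain L where "(\<lambda>k. v \<bullet> (Yit B k *v v)) \<longlonglongrightarrow> L"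
    using incseq_convergent[OF Yit_quad_mono] by blast
  thus ?thesis by (auto simp: convergent_def)
qed

lemma Yit_entry_conv: "convergent (\<lambda>k. Yit B k $ i $ j)"
proof -
  have e: "Yit B k $ i $ j = ((axis i 1 + axis j 1) \<bullet> (Yit B k *v (axis i 1 + axis j 1))
     - (axis i 1 - axis j 1) \<bullet> (Yit B k *v (axis i 1 - axis j 1))) / 4" for k
    using polar[OF conjunct1[OF Yit_sym_psd[of k]]] entry_inner by metis
  obtain L1 where L1: "(\<lambda>k. (axis i 1 + axis j 1) \<bullet> (Yit B k *v (axis i 1 + axis j 1))) \<longlonglongrightarrow> L1"
    using Yit_quad_conv convergent_def by blast
  obtain L2 where L2: "(\<lambda>k. (axis i 1 - axis j 1) \<bullet> (Yit B k *v (axis i 1 - axis j 1))) \<longlonglongrightarrow> L2"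
    using Yit_quad_conv convergent_def by blast
  have "(\<lambda>k. Yit B k $ i $ j) \<longlonglongrightarrow> (L1 - L2) / 4"
    unfolding e by (intro tendsto_intros L1 L2) simp
  thus ?thesis by (auto simp: convergent_def)
qed

definition Ylim :: "real^'n^'n" where "Ylim = (\<chi> i j. lim (\<lambda>k. Yit B k $ i $ j))"

lemma Ylim_tendsto: "(\<lambda>k. Yit B k $ i $ j) \<longlonglongrightarrow> Ylim $ i $ j"
  using Yit_entry_conv[of i j] by (simp add: Ylim_def convergent_LIMSEQ_iff)

lemma Ylim_quad: "(\<lambda>k. v \<bullet> (Yit B k *v v)) \<longlonglongrightarrow> v \<bullet> (Ylim *v v)"
  unfolding quad_expand by (intro tendsto_intros Ylim_tendsto)

lemma Ylim_psd: "psd Ylim"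
  unfolding psd_def
proof
  fix v
  show "0 \<le> v \<bullet> (Ylim *v v)"
    using Ylim_quad[of v] Yit_sym_psd by (intro LIMSEQ_le_const) (auto simp: psd_def)
qed

lemma Ylim_le: "v \<bullet> (Ylim *v v) \<le> (norm v)\<^sup>2"
  using Ylim_quad[of v] Yit_quad_le by (intro LIMSEQ_le_const2) auto

lemma Ylim_sym: "sym_mat Ylim"
proof -
  have "Yit B k $ i $ j = Yit B k $ j $ i" for k i j
    using Yit_sym_psd[of k] unfolding sym_mat_def by (metis transpose_def vec_lambda_beta)
  hence "Ylim $ i $ j = Ylim $ j $ i" for i j
    using LIMSEQ_unique[OF Ylim_tendsto[of i j]] Ylim_tendsto[of j i] by simp
  then show ?thesis by (simp add: sym_mat_def transpose_def vec_eq_iff)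
qed

lemma Ylim_eq: "2 *\<^sub>R Ylim = B + Ylim ** Ylim"
proof -
  have "(Ylim ** Ylim) $ i $ j = (\<Sum>l\<in>UNIV. Ylim $ i $ l * Ylim $ l $ j)" for i j
    by (simp add: matrix_matrix_mult_def)
  have mm: "(M ** M) $ i $ j = (\<Sum>l\<in>UNIV. M $ i $ l * M $ l $ j)" for M :: "real^'n^'n" and i j
    by (simp add: matrix_matrix_mult_def)
  have t1: "(\<lambda>k. (Yit B k ** Yit B k) $ i $ j) \<longlonglongrightarrow> (Ylim ** Ylim) $ i $ j" for i j
    unfolding mm by (intro tendsto_intros Ylim_tendsto)
  have ys: "Yit B (Suc k) $ i $ j = (1/2) * (B $ i $ j + (Yit B k ** Yit B k) $ i $ j)" for k i j
    by simp
  have "(\<lambda>k. Yit B (Suc k) $ i $ j) \<longlonglongrightarrow> Ylim $ i $ j" for i j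
    using LIMSEQ_Suc[OF Ylim_tendsto] .
  moreover have "(\<lambda>k. Yit B (Suc k) $ i $ j) \<longlonglongrightarrow> (1/2) * (B $ i $ j + (Ylim ** Ylim) $ i $ j)" for i j
    unfolding ys by (intro tendsto_intros t1)
  ultimately have "Ylim $ i $ j = (1/2) * (B $ i $ j + (Ylim ** Ylim) $ i $ j)" for i j
    using LIMSEQ_unique by blast
  then show ?thesis by (simp add: vec_eq_iff mult.commute)
qed

lemma sqrt_aux: "\<exists>S. sym_mat S \<and> psd S \<and> S ** S = mat 1 - B"
proof (intro exI conjI)
  show "sym_mat (mat 1 - Ylim)" using Ylim_sym by (simp add: sym_mat_def transpose_diff)
  show "psd (mat 1 - Ylim)" using Ylim_le
    by (simp add: psd_def mat_diff_mult inner_diff_right power2_norm_eq_inner)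
  have e: "2 *\<^sub>R (Ylim *v v) = B *v v + Ylim *v (Ylim *v v)" for v
    using arg_cong[OF Ylim_eq, of "\<lambda>M. M *v v"]
    by (simp add: mat_scaleR_mult mat_add_mult matrix_vector_mul_assoc)
  show "(mat 1 - Ylim) ** (mat 1 - Ylim) = mat 1 - B"
  proof (rule mat_eqI)
    fix v
    have "((mat 1 - Ylim) ** (mat 1 - Ylim)) *v v = v - 2 *\<^sub>R (Ylim *v v) + Ylim *v (Ylim *v v)"
      by (simp add: matrix_vector_mul_assoc[symmetric] mat_diff_mult matrix_vector_mult_diff_distrib
          scaleR_2 algebra_simps)
    also have "\<dots> = v - B *v v" using e[of v] by (simp add: algebra_simps)
    finally show "((mat 1 - Ylim) ** (mat 1 - Ylim)) *v v = (mat 1 - B) *v v"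
      by (simp add: mat_diff_mult)
  qed
qed

end

lemma sqrt_exists:
  fixes A :: "real^'n^'n"
  assumes S: "sym_mat A" and P: "psd A"
  shows "\<exists>R. sym_mat R \<and> psd R \<and> R ** R = A"
proof -
  obtain K where K: "K > 0" "\<And>v. norm (A *v v) \<le> norm v * K"
    using bounded_linear.pos_bounded[OF matrix_vector_mul_bounded_linear[of A]] by blast
  define B where "B = mat 1 - (1/K) *\<^sub>R A"
  have SB: "sym_mat B" using S by (simp add: B_def sym_mat_def transpose_diff transpose_scaleR)
  have qA: "v \<bullet> (A *v v) \<le> K * (norm v)\<^sup>2" for v
  proof -
    have "v \<bullet> (A *v v) \<le> norm v * norm (A *v v)" by (rule quad_le_norm)
    also have "\<dots> \<le> norm v * (norm v * K)" by (rule mult_left_mono[OF K(2) norm_ge_zero])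
    finally show ?thesis by (simp add: power2_eq_square algebra_simps)
  qed
  have PB: "psd B" unfolding psd_def
  proof
    fix v
    have "(1/K) * (v \<bullet> (A *v v)) \<le> (norm v)\<^sup>2"
      using qA[of v] K(1) by (simp add: field_simps)
    then show "0 \<le> v \<bullet> (B *v v)"
      by (simp add: B_def mat_diff_mult mat_scaleR_mult inner_diff_right power2_norm_eq_inner)
  qed
  have UB: "v \<bullet> (B *v v) \<le> (norm v)\<^sup>2" for v
    using P K(1) by (simp add: B_def mat_diff_mult mat_scaleR_mult inner_diff_right
        power2_norm_eq_inner psd_def)
  obtain S0 where S0: "sym_mat S0" "psd S0" "S0 ** S0 = mat 1 - B"
    using sqrt_aux[OF SB PB UB] by blast
  have "mat 1 - B = (1/K) *\<^sub>R A" by (simp add: B_def)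
  show ?thesis
  proof (intro exI conjI)
    show "sym_mat (sqrt K *\<^sub>R S0)" using S0 by (simp add: sym_mat_def transpose_scaleR)
    show "psd (sqrt K *\<^sub>R S0)" using S0 K(1) by (simp add: psd_def mat_scaleR_mult)
    have "(sqrt K *\<^sub>R S0) ** (sqrt K *\<^sub>R S0) = (sqrt K * sqrt K) *\<^sub>R (S0 ** S0)"
      by (simp add: scale_mult_l scale_mult_r)
    also have "\<dots> = A" using S0(3) \<open>mat 1 - B = _\<close> K(1) by simp
    finally show "(sqrt K *\<^sub>R S0) ** (sqrt K *\<^sub>R S0) = A" .
  qed
qed

lemma matrix_diff_ldistrib': "C ** (A - B) = C ** A - C ** (B::real^'n^'n)"
  by (rule mat_eqI) (simp add: matrix_vector_mul_assoc[symmetric] mat_diff_mult matrix_vector_mult_diff_distrib)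

lemma psd_diag: "psd M \<Longrightarrow> 0 \<le> (M::real^'n^'n) $ i $ i"
  using entry_inner[of M i i] by (simp add: psd_def)

lemma psd_trace_nn: "psd M \<Longrightarrow> 0 \<le> trace (M::real^'n^'n)"
  unfolding trace_def by (intro sum_nonneg psd_diag)

lemma psd_trace_zero:
  fixes M :: "real^'n^'n"
  assumes S: "sym_mat M" and P: "psd M" and t: "trace M = 0"
  shows "M = 0"
proof -
  have nn: "\<forall>i\<in>UNIV. 0 \<le> M $ i $ i" using P entry_inner[of M] by (simp add: psd_def)
  hence "\<forall>i\<in>UNIV. M $ i $ i = 0" using t unfolding trace_def
    using sum_nonneg_eq_0_iff[of UNIV "\<lambda>i. M $ i $ i"] by simp
  hence "M *v axis i 1 = 0" for i using psd_zero[OF S P, of "axis i 1"] entry_inner[of M i i] by simp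
  hence "M $ j $ i = 0" for i j using entry_inner[of M j i] by simp
  then show ?thesis by (simp add: vec_eq_iff)
qed

lemma sandwich_sym_psd:
  fixes D S :: "real^'n^'n"
  assumes D: "sym_mat D" and S: "sym_mat S" and P: "psd S"
  shows "sym_mat (D ** S ** D) \<and> psd (D ** S ** D)"
proof
  show "sym_mat (D ** S ** D)" using D S
    by (simp add: sym_mat_def matrix_transpose_mul matrix_mul_assoc)
  show "psd (D ** S ** D)" unfolding psd_def
  proof
    fix v
    have "v \<bullet> ((D ** S ** D) *v v) = (D *v v) \<bullet> (S *v (D *v v))"
      using sym_inner[OF D, of v "S *v (D *v v)"] by (simp add: matrix_vector_mul_assoc[symmetric])
    then show "0 \<le> v \<bullet> ((D ** S ** D) *v v)" using P by (simp add: psd_def)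
  qed
qed

lemma sqrt_unique:
  fixes S T :: "real^'n^'n"
  assumes SS: "sym_mat S" and PS: "psd S" and ST: "sym_mat T" and PT: "psd T"
    and E: "S ** S = T ** T"
  shows "S = T"
proof -
  define D where "D = S - T"
  have SD: "sym_mat D" using SS ST by (simp add: D_def sym_mat_def transpose_diff)
  have E0: "S ** D + D ** T = 0"
    using E by (simp add: D_def matrix_diff_ldistrib' matrix_diff_rdistrib')
  have "trace (D ** (S ** D + D ** T)) = 0" using E0 by (simp add: trace_def)
  moreover have "trace (T ** D ** D) = trace (D ** T ** D)"
    using trace_mul_sym[of "T ** D" D] by (simp add: matrix_mul_assoc)
  ultimately have "trace (D ** S ** D) + trace (D ** T ** D) = 0"
    by (simp add: matrix_add_ldistrib trace_add matrix_mul_assoc trace_mul_sym[of "D ** D" T])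
  moreover have "trace (D ** S ** D) \<ge> 0" "trace (D ** T ** D) \<ge> 0"
    using sandwich_sym_psd[OF SD SS PS] sandwich_sym_psd[OF SD ST PT] psd_trace_nn by blast+
  ultimately have "trace (D ** S ** D) = 0" "trace (D ** T ** D) = 0" by linarith+
  hence Z1: "D ** S ** D = 0" "D ** T ** D = 0"
    using psd_trace_zero sandwich_sym_psd[OF SD SS PS] sandwich_sym_psd[OF SD ST PT] by blast+
  have "S *v (D *v v) = 0" for v
  proof -
    have "(D *v v) \<bullet> (S *v (D *v v)) = v \<bullet> ((D ** S ** D) *v v)"
      using sym_inner[OF SD, of v "S *v (D *v v)"] by (simp add: matrix_vector_mul_assoc[symmetric])
    then show ?thesis using psd_zero[OF SS PS] Z1 by simp
  qed
  moreover have "T *v (D *v v) = 0" for v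
  proof -
    have "(D *v v) \<bullet> (T *v (D *v v)) = v \<bullet> ((D ** T ** D) *v v)"
      using sym_inner[OF SD, of v "T *v (D *v v)"] by (simp add: matrix_vector_mul_assoc[symmetric])
    then show ?thesis using psd_zero[OF ST PT] Z1 by simp
  qed
  ultimately have "D *v (D *v v) = 0" for v by (simp add: D_def mat_diff_mult)
  hence "(D *v v) \<bullet> (D *v v) = 0" for v using sym_inner[OF SD, of v "D *v v"] by simp
  hence "D *v v = 0" for v by simp
  hence "D = 0" by (intro mat_eqI) simp
  then show ?thesis by (simp add: D_def)
qed

lemma psd_sqrt_prop:
  fixes A :: "real^'n^'n"
  assumes "sym_mat A" "psd A"
  shows "sym_mat (psd_sqrt A) \<and> psd (psd_sqrt A) \<and> psd_sqrt A ** psd_sqrt A = A"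
proof -
  have "\<exists>!S. sym_mat S \<and> (\<forall>v. 0 \<le> v \<bullet> (S *v v)) \<and> S ** S = A"
    using sqrt_exists[OF assms] sqrt_unique unfolding psd_def by metis
  from theI'[OF this] show ?thesis unfolding psd_sqrt_def psd_def .
qed

lemma pd_inv:
  fixes Bm :: "real^'n^'n"
  assumes "pos_def_mat Bm"
  shows "Bm ** matrix_inv Bm = mat 1 \<and> matrix_inv Bm ** Bm = mat 1"
proof -
  have "\<forall>x. Bm *v x = 0 \<longrightarrow> x = 0" using assms unfolding pos_def_mat_def
    by (metis inner_zero_right less_irrefl)
  hence "invertible Bm" using matrix_left_invertible_ker invertible_left_inverse by blast
  then show ?thesis unfolding invertible_def matrix_inv_def by (rule someI_ex)
qed

lemma pd_inv_sym_psd: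
  fixes Bm :: "real^'n^'n"
  assumes P: "pos_def_mat Bm"
  shows "sym_mat (matrix_inv Bm) \<and> psd (matrix_inv Bm)"
proof
  let ?A = "matrix_inv Bm"
  have SB: "transpose Bm = Bm" using P by (simp add: pos_def_mat_def sym_mat_def)
  have I: "Bm ** ?A = mat 1" "?A ** Bm = mat 1" using pd_inv[OF P] by auto
  have "transpose ?A ** Bm = mat 1" using arg_cong[OF I(1), of transpose]
    by (simp add: matrix_transpose_mul SB)
  hence "transpose ?A = transpose ?A ** (Bm ** ?A)" using I by simp
  also have "\<dots> = ?A" using \<open>transpose ?A ** Bm = mat 1\<close> by (simp add: matrix_mul_assoc)
  finally show "sym_mat ?A" by (simp add: sym_mat_def)
  show "psd ?A" unfolding psd_def
  proof
    fix v
    define w where "w = ?A *v v"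
    have "Bm *v w = v" using I by (simp add: w_def matrix_vector_mul_assoc)
    hence "v \<bullet> (?A *v v) = w \<bullet> (Bm *v w)" by (simp add: w_def inner_commute)
    also have "\<dots> \<ge> 0" using P unfolding pos_def_mat_def
      by (cases "w = 0") (auto intro: less_imp_le)
    finally show "0 \<le> v \<bullet> (?A *v v)" .
  qed
qed

lemma spec_conv:
  fixes Bm H :: "real^'n^'n"
  assumes P: "pos_def_mat Bm"
  shows "loewner_le (e *\<^sub>R mat 1) (inv_sqrt Bm ** H ** inv_sqrt Bm) \<Longrightarrow> e * (u \<bullet> (Bm *v u)) \<le> u \<bullet> (H *v u)"
    and "loewner_le (inv_sqrt Bm ** H ** inv_sqrt Bm) (e *\<^sub>R mat 1) \<Longrightarrow> u \<bullet> (H *v u) \<le> e * (u \<bullet> (Bm *v u))"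
proof -
  let ?A = "matrix_inv Bm"
  let ?S = "inv_sqrt Bm"
  have I: "Bm ** ?A = mat 1" "?A ** Bm = mat 1" using pd_inv[OF P] by auto
  have SB: "sym_mat Bm" using P by (simp add: pos_def_mat_def)
  have SP: "sym_mat ?S" "?S ** ?S = ?A"
    using psd_sqrt_prop[of ?A] pd_inv_sym_psd[OF P] unfolding inv_sqrt_def by auto
  define w where "w = ?S *v (Bm *v u)"
  have "?S *v w = ((?S ** ?S) ** Bm) *v u" by (simp add: w_def matrix_vector_mul_assoc matrix_mul_assoc)
  hence Sw: "?S *v w = u" using I SP by simp
  have ww: "w \<bullet> w = u \<bullet> (Bm *v u)"
  proof -
    have "w \<bullet> w = (Bm *v u) \<bullet> (?S *v w)" using sym_inner[OF SP(1), of "Bm *v u" w]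
      by (simp add: w_def inner_commute)
    also have "\<dots> = u \<bullet> (Bm *v u)" using Sw by (simp add: inner_commute)
    finally show ?thesis .
  qed
  have wM: "w \<bullet> ((?S ** H ** ?S) *v w) = u \<bullet> (H *v u)"
    using sym_inner[OF SP(1), of w "H *v (?S *v w)"] Sw by (simp add: matrix_vector_mul_assoc[symmetric])
  have wE: "w \<bullet> ((e *\<^sub>R mat 1) *v w) = e * (u \<bullet> (Bm *v u))"
    using ww by (simp add: mat_scaleR_mult)
  show "loewner_le (e *\<^sub>R mat 1) (?S ** H ** ?S) \<Longrightarrow> e * (u \<bullet> (Bm *v u)) \<le> u \<bullet> (H *v u)"
    unfolding loewner_le_def using wM wE by metis
  show "loewner_le (?S ** H ** ?S) (e *\<^sub>R mat 1) \<Longrightarrow> u \<bullet> (H *v u) \<le> e * (u \<bullet> (Bm *v u))"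
    unfolding loewner_le_def using wM wE by metis
qed



lemma line_deriv:
  fixes F :: "real^'d \<Rightarrow> real"
  assumes dF: "\<And>z. (F has_derivative (\<lambda>h. G z \<bullet> h)) (at z)"
  shows "((\<lambda>r. F (a + r *\<^sub>R b)) has_real_derivative (G (a + r *\<^sub>R b) \<bullet> b)) (at r)"
proof -
  have l: "((\<lambda>r. a + r *\<^sub>R b) has_derivative (\<lambda>h. h *\<^sub>R b)) (at r)"
    by (intro derivative_eq_intros) auto
  have "((\<lambda>r. F (a + r *\<^sub>R b)) has_derivative (\<lambda>h. G (a + r *\<^sub>R b) \<bullet> (h *\<^sub>R b))) (at r)"
    using has_derivative_compose[OF l dF] by simp
  then show ?thesis unfolding has_field_derivative_def
    by (rule has_derivative_eq_rhs) (auto simp: fun_eq_iff)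
qed

lemma inner_grad_deriv:
  fixes g :: "real^'d \<Rightarrow> real^'d"
  assumes dg: "\<And>y. (g has_derivative (\<lambda>h. H y *v h)) (at y)"
  shows "((\<lambda>z. c \<bullet> g z) has_derivative (\<lambda>h. (c v* H z) \<bullet> h)) (at z)"
proof -
  have "((\<lambda>z. c \<bullet> g z) has_derivative (\<lambda>h. c \<bullet> (H z *v h))) (at z)"
    using bounded_linear.has_derivative[OF bounded_linear_inner_right dg] .
  then show ?thesis by (simp add: dot_lmul_matrix)
qed

lemma mixed:
  fixes f :: "real^'d \<Rightarrow> real" and g :: "real^'d \<Rightarrow> real^'d" and H :: "real^'d \<Rightarrow> real^'d^'d"
  assumes df: "\<And>y. (f has_derivative (\<lambda>h. g y \<bullet> h)) (at y)"
    and dg: "\<And>y. (g has_derivative (\<lambda>h. H y *v h)) (at y)"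
  shows "\<exists>\<xi>. norm (\<xi> - y) \<le> \<bar>s\<bar> * (norm u + norm v) \<and>
    f (y + s *\<^sub>R u + s *\<^sub>R v) - f (y + s *\<^sub>R u) - f (y + s *\<^sub>R v) + f y = s^2 * ((H \<xi> *v u) \<bullet> v)"
proof -
  define \<psi> where "\<psi> r = f (y + s *\<^sub>R u + r *\<^sub>R (s *\<^sub>R v)) - f (y + r *\<^sub>R (s *\<^sub>R v))" for r
  define D\<psi> where "D\<psi> r = (g (y + s *\<^sub>R u + r *\<^sub>R (s *\<^sub>R v)) \<bullet> (s *\<^sub>R v) - g (y + r *\<^sub>R (s *\<^sub>R v)) \<bullet> (s *\<^sub>R v))" for r
  have d\<psi>: "DERIV \<psi> r :> D\<psi> r" for r
    unfolding \<psi>_def D\<psi>_def by (intro DERIV_diff line_deriv df)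
  have "\<exists>z>0. z < 1 \<and> \<psi> 1 - \<psi> 0 = (1 - 0) * D\<psi> z" by (rule MVT2) (auto intro: d\<psi>)
  then obtain r where r: "0 < r" "r < 1"
    "\<psi> 1 - \<psi> 0 = (1 - 0) * (g (y + s *\<^sub>R u + r *\<^sub>R (s *\<^sub>R v)) \<bullet> (s *\<^sub>R v) - g (y + r *\<^sub>R (s *\<^sub>R v)) \<bullet> (s *\<^sub>R v))"
    unfolding D\<psi>_def by blast
  define a where "a = y + r *\<^sub>R (s *\<^sub>R v)"
  define \<theta> where "\<theta> \<tau> = (s *\<^sub>R v) \<bullet> g (a + \<tau> *\<^sub>R (s *\<^sub>R u))" for \<tau>
  define D\<theta> where "D\<theta> \<tau> = (((s *\<^sub>R v) v* H (a + \<tau> *\<^sub>R (s *\<^sub>R u))) \<bullet> (s *\<^sub>R u))" for \<tau>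
  have d\<theta>: "DERIV \<theta> \<tau> :> D\<theta> \<tau>" for \<tau>
    unfolding \<theta>_def D\<theta>_def by (intro line_deriv inner_grad_deriv dg)
  have "\<exists>z>0. z < 1 \<and> \<theta> 1 - \<theta> 0 = (1 - 0) * D\<theta> z" by (rule MVT2) (auto intro: d\<theta>)
  then obtain \<tau> where t: "0 < \<tau>" "\<tau> < 1"
    "\<theta> 1 - \<theta> 0 = (1 - 0) * (((s *\<^sub>R v) v* H (a + \<tau> *\<^sub>R (s *\<^sub>R u))) \<bullet> (s *\<^sub>R u))"
    unfolding D\<theta>_def by blast
  define \<xi> where "\<xi> = a + \<tau> *\<^sub>R (s *\<^sub>R u)"
  have e1: "\<psi> 1 - \<psi> 0 = f (y + s *\<^sub>R u + s *\<^sub>R v) - f (y + s *\<^sub>R u) - f (y + s *\<^sub>R v) + f y"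
    by (simp add: \<psi>_def algebra_simps)
  have e2: "\<theta> 1 - \<theta> 0 = g (y + s *\<^sub>R u + r *\<^sub>R (s *\<^sub>R v)) \<bullet> (s *\<^sub>R v) - g (y + r *\<^sub>R (s *\<^sub>R v)) \<bullet> (s *\<^sub>R v)"
    by (simp add: \<theta>_def a_def algebra_simps inner_commute)
  have e3: "((s *\<^sub>R v) v* H \<xi>) \<bullet> (s *\<^sub>R u) = s^2 * ((H \<xi> *v u) \<bullet> v)"
  proof -
    have "((s *\<^sub>R v) v* H \<xi>) \<bullet> (s *\<^sub>R u) = (s *\<^sub>R v) \<bullet> (H \<xi> *v (s *\<^sub>R u))" by (rule dot_lmul_matrix)
    also have "\<dots> = s^2 * ((H \<xi> *v u) \<bullet> v)"
      by (simp add: matrix_vector_mult_scaleR inner_commute power2_eq_square)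
    finally show ?thesis .
  qed
  have "norm (\<xi> - y) = norm (r *\<^sub>R (s *\<^sub>R v) + \<tau> *\<^sub>R (s *\<^sub>R u))" by (simp add: \<xi>_def a_def)
  also have "\<dots> \<le> norm (r *\<^sub>R (s *\<^sub>R v)) + norm (\<tau> *\<^sub>R (s *\<^sub>R u))" by (rule norm_triangle_ineq)
  also have "\<dots> = r * (\<bar>s\<bar> * norm v) + \<tau> * (\<bar>s\<bar> * norm u)" using r(1) t(1) by (simp add: abs_mult)
  also have "\<dots> \<le> 1 * (\<bar>s\<bar> * norm v) + 1 * (\<bar>s\<bar> * norm u)"
    using r t by (intro add_mono mult_right_mono) auto
  finally have "norm (\<xi> - y) \<le> \<bar>s\<bar> * (norm u + norm v)" by (simp add: algebra_simps)
  moreover have "f (y + s *\<^sub>R u + s *\<^sub>R v) - f (y + s *\<^sub>R u) - f (y + s *\<^sub>R v) + f y = s^2 * ((H \<xi> *v u) \<bullet> v)"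
    using e1 e2 e3 r(3) t(3) by (simp add: \<xi>_def)
  ultimately show ?thesis by blast
qed

lemma mv_inner_tendsto:
  fixes M :: "nat \<Rightarrow> real^'d^'d"
  assumes "M \<longlonglongrightarrow> M0"
  shows "(\<lambda>k. (M k *v u) \<bullet> v) \<longlonglongrightarrow> (M0 *v u) \<bullet> v"
proof -
  have e: "(N *v u) \<bullet> v = (\<Sum>i\<in>UNIV. (\<Sum>j\<in>UNIV. N $ i $ j * u $ j) * v $ i)" for N :: "real^'d^'d"
    by (simp add: inner_vec_def matrix_vector_mult_def)
  show ?thesis unfolding e by (intro tendsto_intros assms)
qed

lemma hess_sym:
  fixes f :: "real^'d \<Rightarrow> real" and g :: "real^'d \<Rightarrow> real^'d" and H :: "real^'d \<Rightarrow> real^'d^'d"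
  assumes df: "\<And>y. (f has_derivative (\<lambda>h. g y \<bullet> h)) (at y)"
    and dg: "\<And>y. (g has_derivative (\<lambda>h. H y *v h)) (at y)"
    and cH: "continuous_on UNIV H"
  shows "sym_mat (H y)"
proof -
  have cy: "isCont H y" using cH continuous_on_eq_continuous_at[OF open_UNIV] by blast
  have key: "(H y *v u) \<bullet> v = (H y *v v) \<bullet> u" for u v
  proof -
    define s where "s k = inverse (real (Suc k))" for k
    have "\<forall>k. \<exists>\<xi>. norm (\<xi> - y) \<le> \<bar>s k\<bar> * (norm u + norm v) \<and>
      f (y + s k *\<^sub>R u + s k *\<^sub>R v) - f (y + s k *\<^sub>R u) - f (y + s k *\<^sub>R v) + f y = (s k)^2 * ((H \<xi> *v u) \<bullet> v)"
      using mixed[OF df dg] by blast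
    then obtain \<xi>1 where x1: "\<And>k. norm (\<xi>1 k - y) \<le> \<bar>s k\<bar> * (norm u + norm v)"
      "\<And>k. f (y + s k *\<^sub>R u + s k *\<^sub>R v) - f (y + s k *\<^sub>R u) - f (y + s k *\<^sub>R v) + f y = (s k)^2 * ((H (\<xi>1 k) *v u) \<bullet> v)"
      by metis
    have "\<forall>k. \<exists>\<xi>. norm (\<xi> - y) \<le> \<bar>s k\<bar> * (norm v + norm u) \<and>
      f (y + s k *\<^sub>R v + s k *\<^sub>R u) - f (y + s k *\<^sub>R v) - f (y + s k *\<^sub>R u) + f y = (s k)^2 * ((H \<xi> *v v) \<bullet> u)"
      using mixed[OF df dg] by blast
    then obtain \<xi>2 where x2: "\<And>k. norm (\<xi>2 k - y) \<le> \<bar>s k\<bar> * (norm v + norm u)"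
      "\<And>k. f (y + s k *\<^sub>R v + s k *\<^sub>R u) - f (y + s k *\<^sub>R v) - f (y + s k *\<^sub>R u) + f y = (s k)^2 * ((H (\<xi>2 k) *v v) \<bullet> u)"
      by metis
    have sp: "s k \<noteq> 0" for k by (simp add: s_def)
    have eq: "(H (\<xi>1 k) *v u) \<bullet> v = (H (\<xi>2 k) *v v) \<bullet> u" for k
    proof -
      have "(s k)^2 * ((H (\<xi>1 k) *v u) \<bullet> v) = (s k)^2 * ((H (\<xi>2 k) *v v) \<bullet> u)"
        using x1(2)[of k] x2(2)[of k] by (simp add: algebra_simps)
      then show ?thesis using sp[of k] by simp
    qed
    have s0: "(\<lambda>k. \<bar>s k\<bar> * C) \<longlonglongrightarrow> 0" for C
      using tendsto_mult_left_zero[OF LIMSEQ_inverse_real_of_nat, of C] by (simp add: s_def mult.commute)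
    have t1: "\<xi>1 \<longlonglongrightarrow> y"
    proof -
      have "(\<lambda>k. \<xi>1 k - y) \<longlonglongrightarrow> 0"
        by (rule Lim_null_comparison[OF _ s0[of "norm u + norm v"]]) (use x1(1) in auto)
      then show ?thesis by (simp add: LIM_zero_iff)
    qed
    have t2: "\<xi>2 \<longlonglongrightarrow> y"
    proof -
      have "(\<lambda>k. \<xi>2 k - y) \<longlonglongrightarrow> 0"
        by (rule Lim_null_comparison[OF _ s0[of "norm v + norm u"]]) (use x2(1) in auto)
      then show ?thesis by (simp add: LIM_zero_iff)
    qed
    have l1: "(\<lambda>k. (H (\<xi>1 k) *v u) \<bullet> v) \<longlonglongrightarrow> (H y *v u) \<bullet> v"
      by (rule mv_inner_tendsto, rule isCont_tendsto_compose[OF cy t1])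
    have l2: "(\<lambda>k. (H (\<xi>2 k) *v v) \<bullet> u) \<longlonglongrightarrow> (H y *v v) \<bullet> u"
      by (rule mv_inner_tendsto, rule isCont_tendsto_compose[OF cy t2])
    show ?thesis using LIMSEQ_unique[OF l1] l2 eq by simp
  qed
  have "H y $ i $ j = H y $ j $ i" for i j
    using entry_inner[of "H y" i j] entry_inner[of "H y" j i] key[of "axis j 1" "axis i 1"]
    by (simp add: inner_commute)
  then show ?thesis by (simp add: sym_mat_def transpose_def vec_eq_iff)
qed

lemma hess_bounds:
  fixes g :: "real^'d \<Rightarrow> real^'d" and H :: "real^'d \<Rightarrow> real^'d^'d"
  assumes dg: "\<And>y. (g has_derivative (\<lambda>h. H y *v h)) (at y)"
    and strong: "\<And>y y'. \<mu> * (norm (y - y'))\<^sup>2 \<le> (g y - g y') \<bullet> (y - y')"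
    and smooth: "\<And>y y'. (g y - g y') \<bullet> (y - y') \<le> L * (norm (y - y'))\<^sup>2"
  shows "\<mu> * (norm v)\<^sup>2 \<le> v \<bullet> (H y *v v) \<and> v \<bullet> (H y *v v) \<le> L * (norm v)\<^sup>2"
proof -
  define \<phi> where "\<phi> r = v \<bullet> g (y + r *\<^sub>R v)" for r
  have "DERIV \<phi> 0 :> ((v v* H (y + 0 *\<^sub>R v)) \<bullet> v)"
    unfolding \<phi>_def by (intro line_deriv inner_grad_deriv dg)
  hence "DERIV \<phi> 0 :> v \<bullet> (H y *v v)" by (simp add: dot_lmul_matrix)
  hence "((\<lambda>r. (\<phi> r - \<phi> 0) / (r - 0)) \<longlongrightarrow> v \<bullet> (H y *v v)) (at 0)"
    by (simp add: has_field_derivative_iff)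
  hence T: "((\<lambda>r. (\<phi> r - \<phi> 0) / r) \<longlongrightarrow> v \<bullet> (H y *v v)) (at_right 0)"
    using tendsto_mono[OF at_le[OF subset_UNIV]] by simp
  have quot: "(\<phi> r - \<phi> 0) / r = ((g (y + r *\<^sub>R v) - g y) \<bullet> ((y + r *\<^sub>R v) - y)) / r^2" if "r > 0" for r
    using that by (simp add: \<phi>_def inner_diff_left inner_diff_right inner_commute power2_eq_square field_simps)
  have n2: "(norm ((y + r *\<^sub>R v) - y))\<^sup>2 = r^2 * (norm v)\<^sup>2" for r
    by (simp add: power_mult_distrib)
  have lo: "\<mu> * (norm v)\<^sup>2 \<le> (\<phi> r - \<phi> 0) / r" if "r > 0" for r
  proof -
    have "\<mu> * (r^2 * (norm v)\<^sup>2) \<le> ((g (y + r *\<^sub>R v) - g y) \<bullet> ((y + r *\<^sub>R v) - y))"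
      using strong[of "y + r *\<^sub>R v" y] n2[of r] by simp
    hence "\<mu> * (norm v)\<^sup>2 \<le> ((g (y + r *\<^sub>R v) - g y) \<bullet> ((y + r *\<^sub>R v) - y)) / r^2"
      using that by (simp add: le_divide_eq algebra_simps)
    then show ?thesis using quot[OF that] by simp
  qed
  have hi: "(\<phi> r - \<phi> 0) / r \<le> L * (norm v)\<^sup>2" if "r > 0" for r
  proof -
    have "((g (y + r *\<^sub>R v) - g y) \<bullet> ((y + r *\<^sub>R v) - y)) \<le> L * (r^2 * (norm v)\<^sup>2)"
      using smooth[of "y + r *\<^sub>R v" y] n2[of r] by simp
    hence "((g (y + r *\<^sub>R v) - g y) \<bullet> ((y + r *\<^sub>R v) - y)) / r^2 \<le> L * (norm v)\<^sup>2"
      using that by (simp add: divide_le_eq algebra_simps)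
    then show ?thesis using quot[OF that] by simp
  qed
  have ev: "\<forall>\<^sub>F r in at_right 0. (0::real) < r" by (rule eventually_at_right_less)
  show ?thesis
  proof
    show "\<mu> * (norm v)\<^sup>2 \<le> v \<bullet> (H y *v v)"
      by (rule tendsto_lowerbound[OF T]) (auto intro: eventually_mono[OF ev] lo)
    show "v \<bullet> (H y *v v) \<le> L * (norm v)\<^sup>2"
      by (rule tendsto_upperbound[OF T]) (auto intro: eventually_mono[OF ev] hi)
  qed
qed



lemma worker_bound:
  fixes g :: "real^'d \<Rightarrow> real^'d" and H :: "real^'d \<Rightarrow> real^'d^'d" and Bm :: "real^'d^'d"
  assumes dg: "\<And>y. (g has_derivative (\<lambda>h. H y *v h)) (at y)"
    and symH: "\<And>y. sym_mat (H y)"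
    and SB: "sym_mat Bm"
    and lo: "\<And>y u. ed * (u \<bullet> (Bm *v u)) \<le> u \<bullet> (H y *v u)"
    and hi: "\<And>y u. u \<bullet> (H y *v u) \<le> eu * (u \<bullet> (Bm *v u))"
    and Hup: "\<And>y u. u \<bullet> (H y *v u) \<le> L * (norm u)\<^sup>2"
    and ed: "0 < ed" and edu: "ed < eu" and eta: "0 < eta" and e2: "eta * (ed + eu) \<le> 2"
    and e1: "eta * ed \<le> 1"
  shows "norm (Bm *v (z - xs) - eta *\<^sub>R (g z - g xs)) \<le> ((1 - eta * ed) * (L / ed)) * norm (z - xs)"
proof -
  define c0 where "c0 = (1 - eta * ed) * (L / ed)"
  define M where "M y = Bm - eta *\<^sub>R H y" for y
  have SM: "sym_mat (M y)" for y using SB symH[of y]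
    by (simp add: M_def sym_mat_def transpose_diff transpose_scaleR)
  have qb: "\<bar>h \<bullet> (M y *v h)\<bar> \<le> c0 * (norm h)\<^sup>2" for y h
  proof -
    define b where "b = h \<bullet> (Bm *v h)"
    define q where "q = h \<bullet> (H y *v h)"
    have l: "ed * b \<le> q" "q \<le> eu * b" "q \<le> L * (norm h)\<^sup>2"
      using lo[where y=y and u=h] hi[where y=y and u=h] Hup[where y=y and u=h] by (auto simp: b_def q_def)
    have b0: "0 \<le> b"
    proof -
      have "(eu - ed) * b \<ge> 0" using l by (simp add: algebra_simps)
      thus ?thesis using edu by (simp add: zero_le_mult_iff)
    qed
    have bL: "b \<le> L * (norm h)\<^sup>2 / ed" using l ed by (simp add: le_divide_eq mult.commute)
    have A1: "eta * (ed * b) \<le> eta * q" using l eta by (intro mult_left_mono) auto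
    have A2: "eta * q \<le> eta * (eu * b)" using l eta by (intro mult_left_mono) auto
    have c: "0 \<le> 1 - eta * ed" using e1 by simp
    have hM: "h \<bullet> (M y *v h) = b - eta * q"
      by (simp add: M_def b_def q_def mat_diff_mult mat_scaleR_mult inner_diff_right)
    have up1: "b - eta * q \<le> (1 - eta * ed) * b" using A1 by (simp add: algebra_simps)
    have up2: "(1 - eta * ed) * b \<le> (1 - eta * ed) * (L * (norm h)\<^sup>2 / ed)"
      by (rule mult_left_mono[OF bL c])
    have lw1: "(1 - eta * eu) * b \<le> b - eta * q" using A2 by (simp add: algebra_simps)
    have lw2: "- ((1 - eta * ed) * b) \<le> (1 - eta * eu) * b"
    proof -
      have "0 \<le> (2 - eta * (ed + eu)) * b" using e2 b0 by simp
      thus ?thesis by (simp add: algebra_simps)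
    qed
    have lw3: "- ((1 - eta * ed) * (L * (norm h)\<^sup>2 / ed)) \<le> - ((1 - eta * ed) * b)"
      using up2 by simp
    have ce: "c0 * (norm h)\<^sup>2 = (1 - eta * ed) * (L * (norm h)\<^sup>2 / ed)"
      by (simp add: c0_def)
    show ?thesis unfolding hM ce using up1 up2 lw1 lw2 lw3 by linarith
  qed
  have nb: "norm (M y *v h) \<le> c0 * norm h" for y h by (rule sym_bound[OF SM qb])
  define F where "F y = Bm *v y - eta *\<^sub>R g y" for y
  have dF: "(F has_derivative (\<lambda>h. Bm *v h - eta *\<^sub>R (H y *v h))) (at y within UNIV)" for y
    unfolding F_def
    by (intro has_derivative_diff has_derivative_scaleR_right dg bounded_linear_imp_has_derivative
        matrix_vector_mul_bounded_linear)
  have on: "onorm (\<lambda>h. Bm *v h - eta *\<^sub>R (H y *v h)) \<le> c0" for y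
  proof (rule onorm_le)
    fix h
    show "norm (Bm *v h - eta *\<^sub>R (H y *v h)) \<le> c0 * norm h"
      using nb[of y h] by (simp add: M_def mat_diff_mult mat_scaleR_mult)
  qed
  have "norm (F z - F xs) \<le> c0 * norm (z - xs)"
    by (rule differentiable_bound[OF convex_UNIV dF on]) auto
  moreover have "F z - F xs = Bm *v (z - xs) - eta *\<^sub>R (g z - g xs)"
    by (simp add: F_def matrix_vector_mult_diff_distrib scaleR_diff_right algebra_simps)
  ultimately show ?thesis by (simp add: c0_def)
qed

lemma two_elems:
  fixes A :: "nat set"
  assumes "finite A" "2 \<le> card A"
  shows "\<exists>a\<in>A. \<exists>b\<in>A. a < b"
proof (rule ccontr)
  assume "\<not> ?thesis"
  hence "\<forall>a\<in>A. \<forall>b\<in>A. a = b" by (metis linorder_neqE_nat)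
  hence "card A \<le> Suc 0" using card_le_Suc0_iff_eq[OF assms(1)] by blast
  thus False using assms(2) by simp
qed

lemma card2:
  fixes a b t :: nat
  assumes "a < b" "b \<le> t" "sched a = i" "sched b = (i::nat)"
  shows "2 \<le> card {s. s \<le> t \<and> sched s = i}"
proof -
  have "a \<le> t" using assms(1,2) by simp
  hence "{a, b} \<subseteq> {s. s \<le> t \<and> sched s = i}" using assms by auto
  moreover have "finite {s. s \<le> t \<and> sched s = i}" by (rule finite_subset[of _ "{..t}"]) auto
  ultimately have "card {a, b} \<le> card {s. s \<le> t \<and> sched s = i}" by (rule card_mono[rotated])
  thus ?thesis using assms(1) by simp
qed

lemma lc_two:
  fixes x :: "nat \<Rightarrow> real^'d"
  assumes C: "2 \<le> card {s. s \<le> t \<and> sched s = i}"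
  shows "\<exists>l2<t. local_copy x sched i t = x (Suc l2) \<and>
     (\<forall>a b. a < b \<and> b \<le> t \<and> sched a = i \<and> sched b = i \<longrightarrow> a \<le> l2)"
proof -
  let ?S = "{s. s \<le> t \<and> sched s = i}"
  have fin: "finite ?S" by (rule finite_subset[of _ "{..t}"]) auto
  obtain a b where ab: "a \<in> ?S" "b \<in> ?S" "a < b" using two_elems[OF fin C] by blast
  define l1 where "l1 = Max ?S"
  have ne: "?S \<noteq> {}" using ab by blast
  have l1S: "l1 \<in> ?S" using Max_in[OF fin ne] l1_def by simp
  have bl1: "b \<le> l1" using Max_ge[OF fin ab(2)] l1_def by simp
  have al1: "a < l1" using ab bl1 by simp
  let ?S' = "{s. s \<le> l1 - 1 \<and> sched s = i}"
  have fin': "finite ?S'" by (rule finite_subset[of _ "{..l1 - 1}"]) auto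
  have aS': "a \<in> ?S'" using ab al1 by auto
  define l2 where "l2 = Max ?S'"
  have l2S: "l2 \<in> ?S'" using Max_in[OF fin'] aS' l2_def by blast
  have l2le: "l2 \<le> l1 - 1" using l2S by simp
  have d1: "delay sched i t = t - l1" by (simp add: delay_def l1_def)
  have l1t: "l1 \<le> t" using l1S by simp
  have t1: "t - delay sched i t - 1 = l1 - 1" using d1 l1t by simp
  have d2: "delay sched i (l1 - 1) = l1 - 1 - l2" by (simp add: delay_def l2_def)
  have "double_delay sched i t = delay sched i t + delay sched i (l1 - 1) + 1"
    by (simp only: double_delay_def t1)
  also have "\<dots> = (t - l1) + (l1 - 1 - l2) + 1" by (simp only: d1 d2)
  also have "\<dots> = t - l2" using l2le al1 l1t by simp
  finally have dd: "double_delay sched i t = t - l2" .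
  have lc: "local_copy x sched i t = x (Suc l2)"
    unfolding local_copy_def using C dd l2le al1 l1t by simp
  have mx: "a' \<le> l2" if "a' < b'" "b' \<le> t" "sched a' = i" "sched b' = i" for a' b'
  proof -
    have "b' \<le> l1" using Max_ge[OF fin, of b'] that l1_def by simp
    hence "a' \<in> ?S'" using that by auto
    thus ?thesis using Max_ge[OF fin'] l2_def by simp
  qed
  have "l2 < t" using l2le al1 l1t by simp
  thus ?thesis using lc mx by blast
qed

lemma epoch_two:
  fixes sched :: "nat \<Rightarrow> nat"
  assumes sched_inf: "\<And>i t. i \<in> {1..n} \<Longrightarrow> \<exists>s\<ge>t. sched s = i"
    and Et: "epoch sched n (Suc (Suc m)) \<le> t" and i: "i \<in> {1..n}"
  shows "\<exists>a b. epoch sched n (Suc m) \<le> a \<and> a < b \<and> b \<le> t \<and> sched a = i \<and> sched b = i"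
proof -
  define E where "E = epoch sched n (Suc m)"
  define P where "P t' = (\<forall>i\<in>{1..n}. 2 \<le> card {s. E \<le> s \<and> s \<le> t' \<and> sched s = i})" for t'
  have fin: "finite {s. E \<le> s \<and> s \<le> t' \<and> sched s = j}" for t' j
    by (rule finite_subset[of _ "{..t'}"]) auto
  have "\<forall>j\<in>{1..n}. \<exists>b. \<exists>a. E \<le> a \<and> a < b \<and> sched a = j \<and> sched b = j"
  proof
    fix j assume j: "j \<in> {1..n}"
    obtain a where a: "a \<ge> E" "sched a = j" using sched_inf[OF j] by blast
    obtain b where b: "b \<ge> Suc a" "sched b = j" using sched_inf[OF j] by blast
    show "\<exists>b. \<exists>a. E \<le> a \<and> a < b \<and> sched a = j \<and> sched b = j" using a b by (intro exI[of _ b] exI[of _ a]) auto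
  qed
  then obtain bf where bf: "\<forall>j\<in>{1..n}. \<exists>a. E \<le> a \<and> a < bf j \<and> sched a = j \<and> sched (bf j) = j"
    by metis
  define T where "T = (\<Sum>j\<in>{1..n}. bf j)"
  have "P T" unfolding P_def
  proof
    fix j assume j: "j \<in> {1..n}"
    obtain a where a: "E \<le> a" "a < bf j" "sched a = j" "sched (bf j) = j" using bf j by blast
    have bT: "bf j \<le> T" unfolding T_def using j by (intro member_le_sum) auto
    have "{a, bf j} \<subseteq> {s. E \<le> s \<and> s \<le> T \<and> sched s = j}" using a bT by auto
    hence "card {a, bf j} \<le> card {s. E \<le> s \<and> s \<le> T \<and> sched s = j}" by (rule card_mono[OF fin])
    thus "2 \<le> card {s. E \<le> s \<and> s \<le> T \<and> sched s = j}" using a by simp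
  qed
  hence PE: "P (epoch sched n (Suc (Suc m)))"
    unfolding epoch.simps(3) E_def[symmetric] P_def[symmetric] by (rule LeastI)
  hence "2 \<le> card {s. E \<le> s \<and> s \<le> epoch sched n (Suc (Suc m)) \<and> sched s = i}"
    using i P_def by blast
  then obtain a b where "a \<in> {s. E \<le> s \<and> s \<le> epoch sched n (Suc (Suc m)) \<and> sched s = i}"
    "b \<in> {s. E \<le> s \<and> s \<le> epoch sched n (Suc (Suc m)) \<and> sched s = i}" "a < b"
    using two_elems[OF fin] by blast
  thus ?thesis using Et E_def by (intro exI[of _ a] exI[of _ b]) auto
qed

lemma inv_of_inj:
  fixes A :: "real^'n^'n"
  assumes "\<forall>v. A *v v = 0 \<longrightarrow> v = 0"
  shows "A ** matrix_inv A = mat 1 \<and> matrix_inv A ** A = mat 1"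
proof -
  have "invertible A" using assms matrix_left_invertible_ker invertible_left_inverse by blast
  then show ?thesis unfolding invertible_def matrix_inv_def by (rule someI_ex)
qed

lemma sum_mat_mult: "(\<Sum>i\<in>I. A i) *v v = (\<Sum>i\<in>I. A i *v v)" for A :: "'a \<Rightarrow> real^'n^'m"
proof (induction I rule: infinite_finite_induct)
  case (insert x F)
  then show ?case by (simp add: mat_add_mult)
qed auto



theorem theorem1:
  fixes n :: nat
    and f :: "nat \<Rightarrow> real^'d \<Rightarrow> real"
    and grad :: "nat \<Rightarrow> real^'d \<Rightarrow> real^'d"
    and hess :: "nat \<Rightarrow> real^'d \<Rightarrow> real^'d^'d"
    and \<mu> L \<epsilon>d \<epsilon>u \<eta> :: real
    and xs :: "real^'d"
    and sched :: "nat \<Rightarrow> nat"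
    and B :: "nat \<Rightarrow> nat \<Rightarrow> real^'d^'d"
    and x :: "nat \<Rightarrow> real^'d"
  assumes n_pos: "1 \<le> n"
    and grad: "\<And>i y. i \<in> {1..n} \<Longrightarrow> (f i has_derivative (\<lambda>h. grad i y \<bullet> h)) (at y)"
    and hess: "\<And>i y. i \<in> {1..n} \<Longrightarrow> (grad i has_derivative (\<lambda>h. hess i y *v h)) (at y)"
    and hess_cont: "\<And>i. i \<in> {1..n} \<Longrightarrow> continuous_on UNIV (hess i)"
    and mu_pos: "0 < \<mu>" and mu_L: "\<mu> < L"
    and strong: "\<And>i y y'. i \<in> {1..n} \<Longrightarrow>
        \<mu> * (norm (y - y'))\<^sup>2 \<le> (grad i y - grad i y') \<bullet> (y - y')"
    and smooth: "\<And>i y y'. i \<in> {1..n} \<Longrightarrow>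
        (grad i y - grad i y') \<bullet> (y - y') \<le> L * (norm (y - y'))\<^sup>2"
    and xs_min: "\<And>y. (1 / real n) * (\<Sum>i\<in>{1..n}. f i xs) \<le> (1 / real n) * (\<Sum>i\<in>{1..n}. f i y)"
    and sched_range: "\<And>t. sched t \<in> {1..n}"
    and sched_inf: "\<And>i t. i \<in> {1..n} \<Longrightarrow> \<exists>s\<ge>t. sched s = i"
    and B_pd: "\<And>i t. i \<in> {1..n} \<Longrightarrow> pos_def_mat (B i t)"
    and B_hold: "\<And>i t. i \<in> {1..n} \<Longrightarrow> (\<exists>s\<le>t. sched s = i) \<Longrightarrow>
        B i t = B i (t - delay sched i t)"
    and B_init: "\<And>i t. i \<in> {1..n} \<Longrightarrow> \<not> (\<exists>s\<le>t. sched s = i) \<Longrightarrow> B i t = B i 0"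
    and eps_pos: "0 < \<epsilon>d" and eps_lt: "\<epsilon>d < \<epsilon>u"
    and spec_lo: "\<And>i t y. i \<in> {1..n} \<Longrightarrow>
        loewner_le (\<epsilon>d *\<^sub>R mat 1) (inv_sqrt (B i t) ** hess i y ** inv_sqrt (B i t))"
    and spec_hi: "\<And>i t y. i \<in> {1..n} \<Longrightarrow>
        loewner_le (inv_sqrt (B i t) ** hess i y ** inv_sqrt (B i t)) (\<epsilon>u *\<^sub>R mat 1)"
    and eps_ratio: "\<epsilon>u / \<epsilon>d < (1 / 2) * (1 + 1 / (L / \<mu>)
        + sqrt ((1 + 1 / (L / \<mu>))\<^sup>2 + 4 / (L / \<mu>)))"
    and eta_lo: "(1 / \<epsilon>d) * (1 - 1 / ((\<epsilon>u / \<epsilon>d) * (L / \<mu>))) < \<eta>"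
    and eta_hi: "\<eta> < 2 / (\<epsilon>d + \<epsilon>u)"
    and master: "\<And>t. x (Suc t) =
        matrix_inv (\<Sum>i\<in>{1..n}. B i t) *v
          ((\<Sum>i\<in>{1..n}. B i t *v local_copy x sched i t)
           - \<eta> *\<^sub>R (\<Sum>i\<in>{1..n}. grad i (local_copy x sched i t)))"
  shows "\<exists>\<rho> < 1. \<forall>m \<ge> 1. \<forall>t. epoch sched n m \<le> t \<and> t < epoch sched n (Suc m) \<longrightarrow>
           norm (x (Suc t) - xs) \<le> \<rho> ^ m * norm (x 0 - xs)"
proof -
  have npos: "real n > 0" using n_pos by simp
  have cardn: "card {1..n} = n" by simp
  have Lpos: "0 < L" using mu_pos mu_L by simp
  have eu_pos: "0 < \<epsilon>u" using eps_pos eps_lt by simp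
  have prod_gt: "(\<epsilon>u / \<epsilon>d) * (L / \<mu>) > 1"
  proof -
    have "\<epsilon>u / \<epsilon>d > 1" using eps_pos eps_lt by simp
    moreover have "L / \<mu> > 1" using mu_pos mu_L by simp
    ultimately show ?thesis by (rule less_1_mult)
  qed
  have q: "1 / ((\<epsilon>u / \<epsilon>d) * (L / \<mu>)) = (\<epsilon>d * \<mu>) / (\<epsilon>u * L)"
    using eps_pos mu_pos eu_pos Lpos by (simp add: field_simps)
  have lo1: "1 - (\<epsilon>d * \<mu>) / (\<epsilon>u * L) < \<eta> * \<epsilon>d"
    using eta_lo eps_pos unfolding q by (simp add: divide_less_eq mult.commute)
  have qpos: "(\<epsilon>d * \<mu>) / (\<epsilon>u * L) < 1"
  proof -
    have "\<epsilon>d * \<mu> < \<epsilon>u * L" using eps_lt mu_L eu_pos mu_pos by (intro mult_strict_mono) auto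
    moreover have "0 < \<epsilon>u * L" using eu_pos Lpos by simp
    ultimately show ?thesis by (simp add: divide_less_eq)
  qed
  have eta_pos: "0 < \<eta>"
  proof -
    have "0 < \<eta> * \<epsilon>d" using lo1 qpos by linarith
    thus ?thesis using eps_pos by (simp add: zero_less_mult_iff)
  qed
  have e2: "\<eta> * (\<epsilon>d + \<epsilon>u) < 2"
    using eta_hi eps_pos eu_pos by (simp add: less_divide_eq)
  have e1: "\<eta> * \<epsilon>d \<le> 1"
  proof -
    have "\<eta> * \<epsilon>d \<le> \<eta> * \<epsilon>u" using eta_pos eps_lt by simp
    thus ?thesis using e2 by (simp add: algebra_simps)
  qed
  define c0 where "c0 = (1 - \<eta> * \<epsilon>d) * (L / \<epsilon>d)"
  define \<rho> where "\<rho> = c0 * (\<epsilon>u / \<mu>)"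
  have c00: "0 \<le> c0" using e1 Lpos eps_pos by (simp add: c0_def)
  have \<rho>0: "0 \<le> \<rho>" using c00 eu_pos mu_pos by (simp add: \<rho>_def)
  have \<rho>1: "\<rho> < 1"
  proof -
    have a: "1 - \<eta> * \<epsilon>d < (\<epsilon>d * \<mu>) / (\<epsilon>u * L)" using lo1 by simp
    have p: "0 < (L / \<epsilon>d) * (\<epsilon>u / \<mu>)" using Lpos eps_pos eu_pos mu_pos by simp
    have "\<rho> = (1 - \<eta> * \<epsilon>d) * ((L / \<epsilon>d) * (\<epsilon>u / \<mu>))" by (simp add: \<rho>_def c0_def)
    also have "\<dots> < ((\<epsilon>d * \<mu>) / (\<epsilon>u * L)) * ((L / \<epsilon>d) * (\<epsilon>u / \<mu>))"
      by (rule mult_strict_right_mono[OF a p])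
    also have "\<dots> = 1" using Lpos eps_pos eu_pos mu_pos by (simp add: field_simps)
    finally show ?thesis .
  qed
  have symH: "sym_mat (hess i y)" if "i \<in> {1..n}" for i y
    by (rule hess_sym[OF grad[OF that] hess[OF that] hess_cont[OF that]])
  have hb: "\<mu> * (norm u)\<^sup>2 \<le> u \<bullet> (hess i y *v u) \<and> u \<bullet> (hess i y *v u) \<le> L * (norm u)\<^sup>2"
    if "i \<in> {1..n}" for i y u
    by (rule hess_bounds[OF hess[OF that] strong[OF that] smooth[OF that]])
  have sl: "\<epsilon>d * (u \<bullet> (B i t *v u)) \<le> u \<bullet> (hess i y *v u)" if "i \<in> {1..n}" for i t y u
    by (rule spec_conv(1)[OF B_pd[OF that] spec_lo[OF that]])
  have sh: "u \<bullet> (hess i y *v u) \<le> \<epsilon>u * (u \<bullet> (B i t *v u))" if "i \<in> {1..n}" for i t y u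
    by (rule spec_conv(2)[OF B_pd[OF that] spec_hi[OF that]])
  have SB: "sym_mat (B i t)" if "i \<in> {1..n}" for i t using B_pd[OF that] by (simp add: pos_def_mat_def)
  have wb: "norm (B i t *v (z - xs) - \<eta> *\<^sub>R (grad i z - grad i xs)) \<le> c0 * norm (z - xs)"
    if "i \<in> {1..n}" for i t z
    unfolding c0_def
    by (rule worker_bound[OF hess[OF that] symH[OF that] SB[OF that] sl[OF that] sh[OF that]
          conjunct2[OF hb[OF that]] eps_pos eps_lt eta_pos less_imp_le[OF e2] e1])
  have Bpos: "(\<mu> / \<epsilon>u) * (norm p)\<^sup>2 \<le> p \<bullet> (B i t *v p)" if "i \<in> {1..n}" for i t p
  proof -
    have "\<mu> * (norm p)\<^sup>2 \<le> \<epsilon>u * (p \<bullet> (B i t *v p))"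
      using conjunct1[OF hb[OF that, of p 0]] sh[OF that, of p 0 t] by linarith
    thus ?thesis using eu_pos by (simp add: divide_le_eq mult.commute)
  qed
  have G0: "(\<Sum>i\<in>{1..n}. grad i xs) = 0"
  proof -
    define F where "F y = (\<Sum>i\<in>{1..n}. f i y)" for y
    have dF: "(F has_derivative (\<lambda>h. \<Sum>i\<in>{1..n}. grad i xs \<bullet> h)) (at xs)"
      unfolding F_def by (intro has_derivative_sum grad) auto
    have ip: "0 < 1 / real n" using npos by simp
    have "F xs \<le> F y" for y using xs_min[of y] unfolding F_def mult_le_cancel_left_pos[OF ip] .
    hence "(\<lambda>h. \<Sum>i\<in>{1..n}. grad i xs \<bullet> h) = (\<lambda>h. 0)"
      by (intro has_derivative_local_min[OF dF]) auto
    hence "(\<Sum>i\<in>{1..n}. grad i xs \<bullet> (\<Sum>i\<in>{1..n}. grad i xs)) = 0" by metis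
    hence "(\<Sum>i\<in>{1..n}. grad i xs) \<bullet> (\<Sum>i\<in>{1..n}. grad i xs) = 0" by (simp add: inner_sum_left)
    thus ?thesis by simp
  qed
  have step: "norm (x (Suc t) - xs) \<le> \<rho> * R"
    if hR: "\<forall>i\<in>{1..n}. norm (local_copy x sched i t - xs) \<le> R" for t R
  proof -
    define z where "z i = local_copy x sched i t" for i
    define Bt where "Bt = (\<Sum>i\<in>{1..n}. B i t)"
    define w where "w i = B i t *v (z i - xs) - \<eta> *\<^sub>R (grad i (z i) - grad i xs)" for i
    have Btq: "real n * (\<mu> / \<epsilon>u) * (norm p)\<^sup>2 \<le> p \<bullet> (Bt *v p)" for p
    proof -
      have "p \<bullet> (Bt *v p) = (\<Sum>i\<in>{1..n}. p \<bullet> (B i t *v p))"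
        by (simp add: Bt_def sum_mat_mult inner_sum_right)
      also have "\<dots> \<ge> (\<Sum>i\<in>{1..n}. (\<mu> / \<epsilon>u) * (norm p)\<^sup>2)" by (intro sum_mono Bpos)
      finally show ?thesis by simp
    qed
    have cpos: "real n * (\<mu> / \<epsilon>u) > 0" using npos mu_pos eu_pos by simp
    have inj: "\<forall>v. Bt *v v = 0 \<longrightarrow> v = 0"
    proof (intro allI impI)
      fix v assume "Bt *v v = 0"
      hence h0: "real n * (\<mu> / \<epsilon>u) * (norm v)\<^sup>2 \<le> 0" using Btq[of v] by simp
      show "v = 0"
      proof (rule ccontr)
        assume "v \<noteq> 0"
        hence "0 < (norm v)\<^sup>2" by simp
        hence "0 < real n * (\<mu> / \<epsilon>u) * (norm v)\<^sup>2" by (rule mult_pos_pos[OF cpos])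
        thus False using h0 by linarith
      qed
    qed
    have I: "Bt ** matrix_inv Bt = mat 1" "matrix_inv Bt ** Bt = mat 1" using inv_of_inj[OF inj] by auto
    have ninv: "norm (matrix_inv Bt *v u) \<le> (\<epsilon>u / (real n * \<mu>)) * norm u" for u
    proof -
      define p where "p = matrix_inv Bt *v u"
      have Bp: "Bt *v p = u" using I by (simp add: p_def matrix_vector_mul_assoc)
      have "real n * (\<mu> / \<epsilon>u) * (norm p)\<^sup>2 \<le> norm p * norm u"
        using Btq[of p] Bp norm_cauchy_schwarz[of p u] by simp
      hence hh: "norm p * (real n * (\<mu> / \<epsilon>u) * norm p) \<le> norm p * norm u"
        by (simp add: power2_eq_square algebra_simps)
      have h: "real n * (\<mu> / \<epsilon>u) * norm p \<le> norm u" if "p \<noteq> 0"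
      proof -
        have pp: "0 < norm p" using that by simp
        show ?thesis using hh unfolding mult_le_cancel_left_pos[OF pp] .
      qed
      show ?thesis
      proof (cases "p = 0")
        case True then show ?thesis using eu_pos npos mu_pos by (simp add: p_def)
      next
        case False
        have "norm p * (real n * (\<mu> / \<epsilon>u)) \<le> norm u"
          using h[OF False] mult.commute[of "norm p" "real n * (\<mu> / \<epsilon>u)"] by linarith
        hence "norm p \<le> norm u / (real n * (\<mu> / \<epsilon>u))"
          by (simp only: pos_le_divide_eq[OF cpos])
        then show ?thesis using npos mu_pos eu_pos by (simp add: p_def field_simps)
      qed
    qed
    have sumw: "(\<Sum>i\<in>{1..n}. w i) = (\<Sum>i\<in>{1..n}. B i t *v z i) - \<eta> *\<^sub>R (\<Sum>i\<in>{1..n}. grad i (z i)) - Bt *v xs"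
    proof -
      have "(\<Sum>i\<in>{1..n}. w i) = (\<Sum>i\<in>{1..n}. B i t *v z i) - (\<Sum>i\<in>{1..n}. B i t *v xs)
          - (\<eta> *\<^sub>R (\<Sum>i\<in>{1..n}. grad i (z i)) - \<eta> *\<^sub>R (\<Sum>i\<in>{1..n}. grad i xs))"
        by (simp add: w_def matrix_vector_mult_diff_distrib scaleR_diff_right sum_subtractf
            scaleR_sum_right)
      also have "\<dots> = (\<Sum>i\<in>{1..n}. B i t *v z i) - \<eta> *\<^sub>R (\<Sum>i\<in>{1..n}. grad i (z i)) - Bt *v xs"
        using G0 by (simp add: Bt_def sum_mat_mult)
      finally show ?thesis .
    qed
    have xe: "x (Suc t) - xs = matrix_inv Bt *v (\<Sum>i\<in>{1..n}. w i)"
    proof -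
      have "matrix_inv Bt *v (Bt *v xs) = xs" using I by (simp add: matrix_vector_mul_assoc)
      thus ?thesis unfolding sumw master[of t] Bt_def[symmetric] z_def
        by (simp add: matrix_vector_mult_diff_distrib)
    qed
    have nw: "norm (w i) \<le> c0 * R" if "i \<in> {1..n}" for i
    proof -
      have "norm (w i) \<le> c0 * norm (z i - xs)" unfolding w_def by (rule wb[OF that])
      also have "\<dots> \<le> c0 * R" using hR that c00 by (intro mult_left_mono) (auto simp: z_def)
      finally show ?thesis .
    qed
    have "norm (\<Sum>i\<in>{1..n}. w i) \<le> (\<Sum>i\<in>{1..n}. norm (w i))" by (rule norm_sum)
    also have "\<dots> \<le> (\<Sum>i\<in>{1..n}. c0 * R)" by (intro sum_mono nw)
    also have "\<dots> = real n * (c0 * R)" by simp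
    finally have sw: "norm (\<Sum>i\<in>{1..n}. w i) \<le> real n * (c0 * R)" .
    have "norm (x (Suc t) - xs) \<le> (\<epsilon>u / (real n * \<mu>)) * norm (\<Sum>i\<in>{1..n}. w i)"
      unfolding xe by (rule ninv)
    also have "\<dots> \<le> (\<epsilon>u / (real n * \<mu>)) * (real n * (c0 * R))"
      using sw eu_pos npos mu_pos by (intro mult_left_mono) auto
    also have "\<dots> = \<rho> * R" using npos mu_pos by (simp add: \<rho>_def field_simps)
    finally show ?thesis .
  qed
  define c where "c = norm (x 0 - xs)"
  have Q: "\<forall>k. epoch sched n k \<le> t \<longrightarrow> norm (x (Suc t) - xs) \<le> \<rho> ^ k * c" for t
  proof (induction t rule: less_induct)
    case (less t)
    have base: "norm (local_copy x sched i t - xs) \<le> c" if "i \<in> {1..n}" for i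
    proof (cases "2 \<le> card {s. s \<le> t \<and> sched s = i}")
      case True
      then obtain l2 where l2: "l2 < t" "local_copy x sched i t = x (Suc l2)"
        using lc_two[OF True, of x] by blast
      have "norm (x (Suc l2) - xs) \<le> \<rho> ^ 0 * c" using spec[OF less[OF l2(1)], of 0] by simp
      then show ?thesis using l2 by simp
    next
      case False
      then show ?thesis by (simp add: local_copy_def c_def)
    qed
    have c0': "0 \<le> c" by (simp add: c_def)
    show ?case
    proof (intro allI impI)
      fix k assume Ek: "epoch sched n k \<le> t"
      show "norm (x (Suc t) - xs) \<le> \<rho> ^ k * c"
      proof (cases "k \<le> 1")
        case True
        have "norm (x (Suc t) - xs) \<le> \<rho> * c" using step base by blast
        moreover have "\<rho> * c \<le> \<rho> ^ k * c"
        proof (cases "k = 0")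
          case True
          have "\<rho> * c \<le> 1 * c" using \<rho>1 c0' by (intro mult_right_mono) auto
          then show ?thesis using True by simp
        next
          case False then show ?thesis using \<open>k \<le> 1\<close> by (simp add: le_Suc_eq)
        qed
        ultimately show ?thesis by linarith
      next
        case False
        define m where "m = k - 2"
        have km: "k = Suc (Suc m)" using False by (simp add: m_def)
        have bnd: "norm (local_copy x sched i t - xs) \<le> \<rho> ^ Suc m * c" if i: "i \<in> {1..n}" for i
        proof -
          obtain a b where ab: "epoch sched n (Suc m) \<le> a" "a < b" "b \<le> t" "sched a = i" "sched b = i"
          proof -
            have "epoch sched n (Suc (Suc m)) \<le> t" using Ek km by simp
            from epoch_two[where n=n and sched=sched and m=m and t=t and i=i, OF sched_inf this i]
            show ?thesis using that by blast
          qed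
          have C: "2 \<le> card {s. s \<le> t \<and> sched s = i}" by (rule card2[OF ab(2,3,4,5)])
          obtain l2 where l2: "l2 < t" "local_copy x sched i t = x (Suc l2)"
            "\<forall>a b. a < b \<and> b \<le> t \<and> sched a = i \<and> sched b = i \<longrightarrow> a \<le> l2"
            using lc_two[OF C, of x] by blast
          have "a \<le> l2" using l2(3) ab by blast
          hence "epoch sched n (Suc m) \<le> l2" using ab(1) by simp
          then have "norm (x (Suc l2) - xs) \<le> \<rho> ^ Suc m * c" using spec[OF less[OF l2(1)], of "Suc m"] by blast
          then show ?thesis using l2(2) by simp
        qed
        have "norm (x (Suc t) - xs) \<le> \<rho> * (\<rho> ^ Suc m * c)" using step bnd by blast
        then show ?thesis using km by simp
      qed
    qed
  qed
  show ?thesis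
  proof (intro exI conjI allI impI)
    show "\<rho> < 1" by (rule \<rho>1)
    fix m t assume "1 \<le> m" "epoch sched n m \<le> t \<and> t < epoch sched n (Suc m)"
    then show "norm (x (Suc t) - xs) \<le> \<rho> ^ m * norm (x 0 - xs)" using Q[of t] by (simp add: c_def)
  qed
qed


end
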